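(* Let $\mu>1$ be an integer upper bound, $d>1$ an arbitrary discount factor and $v\in\mathbb{Q}$ a threshold value. Then: (1) the comparison language with upper bound $\mu$, relation $\mathsf{R}$, discount factor $d$ and threshold $v$ is a safety language for $\mathsf{R}\in\{\le,\ge,=\}$; (2) it is a co-safety language for $\mathsf{R}\in\{<,>,\neq\}$.
   Context: For an infinite sequence $A=a_0a_1\dots$, $\mathrm{DS}(A,d)=\sum_{i\ge0}a_i/d^i$. The comparison language with upper bound $\mu$, relation $\mathsf{R}\in\{<,>,\le,\ge,=,\neq\}$, discount factor $d$ and threshold value $v$ is the set of infinite words $A$ over the alphabet $\Sigma=\{-\mu,\dots,\mu\}$ such that $\mathrm{DS}(A,d)\ \mathsf{R}\ v$. For a language $L\subseteq\Sigma^\omega$, a finite word $x\in\Sigma^*$ is a bad prefix for $L$ if $x\cdot y\notin L$ for all $y\in\Sigma^\omega$; $L$ is a safety language if every word not in $L$ has a bad prefix for $L$; $L$ is a co-safety language if its complement $\Sigma^\omega\setminus L$ is a safety language. *)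

theory Defs
  imports Complex_Main
begin

definition alphabet :: "int \<Rightarrow> int set" where
  "alphabet \<mu> = {-\<mu>..\<mu>}"

definition omega_words :: "'a set \<Rightarrow> (nat \<Rightarrow> 'a) set" where
  "omega_words \<Sigma> = {w. \<forall>i. w i \<in> \<Sigma>}"

definition conc :: "'a list \<Rightarrow> (nat \<Rightarrow> 'a) \<Rightarrow> (nat \<Rightarrow> 'a)" where
  "conc x y = (\<lambda>i. if i < length x then x ! i else y (i - length x))"

definition DS :: "(nat \<Rightarrow> int) \<Rightarrow> real \<Rightarrow> real" where
  "DS A d = (\<Sum>i. real_of_int (A i) / d ^ i)"

datatype rel = Lt | Gt | Le | Ge | Eq | Neq

fun rel_sem :: "rel \<Rightarrow> real \<Rightarrow> real \<Rightarrow> bool" where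
  "rel_sem Lt a b = (a < b)"
| "rel_sem Gt a b = (a > b)"
| "rel_sem Le a b = (a \<le> b)"
| "rel_sem Ge a b = (a \<ge> b)"
| "rel_sem Eq a b = (a = b)"
| "rel_sem Neq a b = (a \<noteq> b)"

definition comparison_language :: "int \<Rightarrow> rel \<Rightarrow> real \<Rightarrow> real \<Rightarrow> (nat \<Rightarrow> int) set" where
  "comparison_language \<mu> R d v = {A \<in> omega_words (alphabet \<mu>). rel_sem R (DS A d) v}"

definition bad_prefix :: "'a set \<Rightarrow> (nat \<Rightarrow> 'a) set \<Rightarrow> 'a list \<Rightarrow> bool" where
  "bad_prefix \<Sigma> L x \<longleftrightarrow> set x \<subseteq> \<Sigma> \<and> (\<forall>y \<in> omega_words \<Sigma>. conc x y \<notin> L)"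

definition safety :: "'a set \<Rightarrow> (nat \<Rightarrow> 'a) set \<Rightarrow> bool" where
  "safety \<Sigma> L \<longleftrightarrow> (\<forall>w \<in> omega_words \<Sigma> - L. \<exists>n. bad_prefix \<Sigma> L (map w [0..<n]))"

definition co_safety :: "'a set \<Rightarrow> (nat \<Rightarrow> 'a) set \<Rightarrow> bool" where
  "co_safety \<Sigma> L \<longleftrightarrow> safety \<Sigma> (omega_words \<Sigma> - L)"

end

theory Submission
  imports Defs
begin

lemma ow_bound: "w \<in> omega_words (alphabet \<mu>) \<Longrightarrow> \<bar>w i\<bar> \<le> \<mu>"
  unfolding omega_words_def alphabet_def by (simp add: abs_le_iff) (metis minus_le_iff)

lemma summ:
  fixes a :: "nat \<Rightarrow> int"
  assumes "\<And>i. \<bar>real_of_int (a i)\<bar> \<le> (M::real)" "d > 1"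
  shows "summable (\<lambda>i. real_of_int (a i) / d ^ i)"
proof (rule summable_comparison_test[where g="\<lambda>i. M * (1/d)^i"])
  show "\<exists>N. \<forall>n\<ge>N. norm (a n / d ^ n) \<le> M * (1 / d) ^ n"
    using assms by (auto simp: power_one_over divide_right_mono)
  show "summable (\<lambda>i. M * (1/d)^i)"
    using assms by (intro summable_mult summable_geometric) auto
qed

lemma diff_bound:
  fixes a b :: "nat \<Rightarrow> int" and \<mu> :: int
  assumes a: "\<And>i. \<bar>a i\<bar> \<le> \<mu>" and b: "\<And>i. \<bar>b i\<bar> \<le> \<mu>"
    and eq: "\<And>i. i < n \<Longrightarrow> a i = b i" and d: "d > 1"
  shows "\<bar>DS a d - DS b d\<bar> \<le> 2 * \<mu> * (1/d)^n * (1 / (1 - 1/d))"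
proof -
  define g where "g i = real_of_int (a i - b i) / d ^ i" for i
  have sa: "summable (\<lambda>i. real_of_int (a i) / d ^ i)"
    by (rule summ[where M="real_of_int \<mu>"]) (use a d in \<open>auto simp flip: of_int_abs\<close>)
  have sb: "summable (\<lambda>i. real_of_int (b i) / d ^ i)"
    by (rule summ[where M="real_of_int \<mu>"]) (use b d in \<open>auto simp flip: of_int_abs\<close>)
  have gab: "g = (\<lambda>i. real_of_int (a i) / d ^ i - real_of_int (b i) / d ^ i)"
    by (auto simp: g_def diff_divide_distrib)
  have sg: "summable g" using sa sb gab by (simp add: summable_diff)
  have "DS a d - DS b d = suminf g"
    unfolding DS_def gab using suminf_diff[OF sa sb] by simp
  also have "suminf g = (\<Sum>i. g (i + n)) + sum g {..<n}"
    by (rule suminf_split_initial_segment[OF sg])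
  also have "sum g {..<n} = 0" by (auto simp: g_def eq intro!: sum.neutral)
  finally have e: "DS a d - DS b d = (\<Sum>i. g (i + n))" by simp
  have sgn: "summable (\<lambda>i. g (i + n))" using sg by (simp add: summable_iff_shift)
  have bnd: "\<bar>g (i + n)\<bar> \<le> 2 * \<mu> * (1/d)^n * (1/d)^i" for i
  proof -
    have "\<bar>real_of_int (a (i+n) - b (i+n))\<bar> \<le> 2 * \<mu>"
      using a[of "i+n"] b[of "i+n"] by linarith
    moreover have "d ^ (i+n) > 0" using d by simp
    ultimately have "\<bar>g (i+n)\<bar> \<le> 2 * \<mu> / d ^ (i+n)"
      by (simp add: g_def abs_divide divide_right_mono)
    also have "\<dots> = 2 * \<mu> * (1/d)^n * (1/d)^i"
      by (simp add: power_add power_one_over field_simps)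
    finally show ?thesis .
  qed
  have sgeo: "summable (\<lambda>i. 2 * \<mu> * (1/d)^n * (1/d)^i)"
    using d by (intro summable_mult summable_geometric) auto
  have sabs: "summable (\<lambda>i. \<bar>g (i + n)\<bar>)"
    by (rule summable_comparison_test[OF _ sgeo]) (use bnd in auto)
  have "\<bar>\<Sum>i. g (i + n)\<bar> \<le> (\<Sum>i. \<bar>g (i + n)\<bar>)" by (rule summable_rabs[OF sabs])
  also have "\<dots> \<le> (\<Sum>i. 2 * \<mu> * (1/d)^n * (1/d)^i)"
    by (rule suminf_le[OF bnd sabs sgeo])
  also have "\<dots> = 2 * \<mu> * (1/d)^n * (1 / (1 - 1/d))"
    using d by (subst suminf_mult) (auto simp: suminf_geometric)
  finally show ?thesis using e by simp
qed

lemma conc_ow: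
  assumes "w \<in> omega_words S" "y \<in> omega_words S"
  shows "conc (map w [0..<n]) y \<in> omega_words S"
  using assms by (auto simp: omega_words_def conc_def)

lemma near:
  assumes w: "w \<in> omega_words (alphabet \<mu>)" and d: "d > 1" and e: "e > 0"
  shows "\<exists>n. \<forall>y\<in>omega_words (alphabet \<mu>).
           \<bar>DS (conc (map w [0..<n]) y) d - DS w d\<bar> < e"
proof -
  have "(\<lambda>n. 2 * \<mu> * (1/d)^n * (1 / (1 - 1/d))) \<longlonglongrightarrow> 0"
    using d by (intro tendsto_mult_left_zero tendsto_mult_right_zero LIMSEQ_power_zero) auto
  then have "eventually (\<lambda>n. 2 * \<mu> * (1/d)^n * (1 / (1 - 1/d)) < e) sequentially"
    using e by (simp add: order_tendstoD(2))
  then obtain n where n: "2 * \<mu> * (1/d)^n * (1 / (1 - 1/d)) < e"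
    using eventually_sequentially by auto
  show ?thesis
  proof (intro exI ballI)
    fix y assume y: "y \<in> omega_words (alphabet \<mu>)"
    have "\<bar>DS (conc (map w [0..<n]) y) d - DS w d\<bar> \<le> 2 * \<mu> * (1/d)^n * (1 / (1 - 1/d))"
      by (rule diff_bound[OF ow_bound[OF conc_ow[OF w y]] ow_bound[OF w] _ d])
         (auto simp: conc_def)
    then show "\<bar>DS (conc (map w [0..<n]) y) d - DS w d\<bar> < e" using n by linarith
  qed
qed

lemma prefix_alph: "w \<in> omega_words S \<Longrightarrow> set (map w [0..<n]) \<subseteq> S"
  by (auto simp: omega_words_def)

theorem theorem5:
  fixes \<mu> :: int and d v :: real and R :: rel
  assumes "\<mu> > 1" and "d > 1" and "v \<in> \<rat>"
  shows "(R \<in> {Le, Ge, Eq} \<longrightarrow> safety (alphabet \<mu>) (comparison_language \<mu> R d v))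
       \<and> (R \<in> {Lt, Gt, Neq} \<longrightarrow> co_safety (alphabet \<mu>) (comparison_language \<mu> R d v))"
proof -
  let ?W = "omega_words (alphabet \<mu>)"
  have key: "\<exists>n. \<forall>y\<in>?W. rel_sem R (DS (conc (map w [0..<n]) y) d) v = rel_sem R (DS w d) v"
    if w: "w \<in> ?W" and R: "(R \<in> {Le, Ge, Eq} \<and> \<not> rel_sem R (DS w d) v) \<or>
        (R \<in> {Lt, Gt, Neq} \<and> rel_sem R (DS w d) v)" for w
  proof (cases "DS w d = v")
    case True
    then show ?thesis using R by (cases R) auto
  next
    case False
    then have "\<bar>DS w d - v\<bar> > 0" by simp
    from near[OF w assms(2) this] obtain n where
      n: "\<forall>y\<in>?W. \<bar>DS (conc (map w [0..<n]) y) d - DS w d\<bar> < \<bar>DS w d - v\<bar>" by blast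
    show ?thesis
    proof (intro exI ballI)
      fix y assume "y \<in> ?W"
      with n have h: "\<bar>DS (conc (map w [0..<n]) y) d - DS w d\<bar> < \<bar>DS w d - v\<bar>" by blast
      show "rel_sem R (DS (conc (map w [0..<n]) y) d) v = rel_sem R (DS w d) v"
        using h False by (cases R) (auto simp: abs_if split: if_splits)
    qed
  qed
  have A: "safety (alphabet \<mu>) (comparison_language \<mu> R d v)" if "R \<in> {Le, Ge, Eq}"
    unfolding safety_def
  proof
    fix w assume "w \<in> ?W - comparison_language \<mu> R d v"
    then have w: "w \<in> ?W" and nr: "\<not> rel_sem R (DS w d) v"
      by (auto simp: comparison_language_def)
    from key[OF w] nr that obtain n where
      n: "\<forall>y\<in>?W. rel_sem R (DS (conc (map w [0..<n]) y) d) v = rel_sem R (DS w d) v" by auto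
    show "\<exists>n. bad_prefix (alphabet \<mu>) (comparison_language \<mu> R d v) (map w [0..<n])"
      using n nr prefix_alph[OF w]
      by (auto simp: bad_prefix_def comparison_language_def)
  qed
  have B: "co_safety (alphabet \<mu>) (comparison_language \<mu> R d v)" if "R \<in> {Lt, Gt, Neq}"
    unfolding co_safety_def safety_def
  proof
    fix w assume "w \<in> ?W - (?W - comparison_language \<mu> R d v)"
    then have w: "w \<in> ?W" and nr: "rel_sem R (DS w d) v"
      by (auto simp: comparison_language_def)
    from key[OF w] nr that obtain n where
      n: "\<forall>y\<in>?W. rel_sem R (DS (conc (map w [0..<n]) y) d) v = rel_sem R (DS w d) v" by auto
    show "\<exists>n. bad_prefix (alphabet \<mu>) (?W - comparison_language \<mu> R d v) (map w [0..<n])"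
      using n nr prefix_alph[OF w] conc_ow[OF w]
      by (auto simp: bad_prefix_def comparison_language_def)
  qed
  show ?thesis using A B by blast
qed

end
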